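(* Let $p,\delta\in(0,1)$, $k\ge2$, and let $F$ be a $k$-graph. Let $\mathbf P$ be the property that a $k$-graph $H$ satisfies $t_{\rm inj}(F,H)=p\pm\delta$. Then $\mathbf P$ is testable.
   Context: A $k$-graph is a $k$-uniform hypergraph identified with its edge set. $x=y\pm z$ means $|x-y|\le z$. For $k$-graphs $F,H$ with $|V(H)|=n$, $\mathrm{inj}(F,H)$ is the number of injective maps $f:V(F)\to V(H)$ mapping every edge of $F$ onto an edge of $H$, and $t_{\rm inj}(F,H)=\mathrm{inj}(F,H)/(n)_{|V(F)|}$, where $(n)_r=n(n-1)\cdots(n-r+1)$. For $k$-graphs $G,H$ on a common vertex set of size $n$, they are $\alpha$-close if $|G\triangle H|\le\alpha\binom nk$; an $n$-vertex $H$ is $\alpha$-far from satisfying a property $\mathbf P$ if no $k$-graph on $V(H)$ satisfying $\mathbf P$ is $\alpha$-close to $H$. A property $\mathbf P$ is testable if there is a function $q:(0,1)\to\mathbb N$ such that for every $n$ and $\alpha\in(0,1)$ there is a randomized algorithm that, given an $n$-vertex $k$-graph $H$ via edge queries (asking whether a given $k$-set is an edge), makes at most $q(\alpha)$ queries, accepts with probability at least $2/3$ if $H$ satisfies $\mathbf P$ and rejects with probability at least $2/3$ if $H$ is $\alpha$-far from satisfying $\mathbf P$. *)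

theory Defs
  imports "HOL-Probability.Probability"
begin

definition kgraph :: "nat \<Rightarrow> 'a set \<Rightarrow> 'a set set \<Rightarrow> bool" where
  "kgraph k V E \<longleftrightarrow> (\<forall>e\<in>E. e \<subseteq> V \<and> card e = k)"

definition inj_count :: "'a set \<Rightarrow> 'a set set \<Rightarrow> nat \<Rightarrow> nat set set \<Rightarrow> nat" where
  "inj_count VF EF n H =
     card {f \<in> VF \<rightarrow>\<^sub>E {0..<n}. inj_on f VF \<and> (\<forall>e\<in>EF. f ` e \<in> H)}"

definition falling :: "nat \<Rightarrow> nat \<Rightarrow> real" where
  "falling n r = (\<Prod>i<r. real n - real i)"

definition t_inj :: "'a set \<Rightarrow> 'a set set \<Rightarrow> nat \<Rightarrow> nat set set \<Rightarrow> real" where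
  "t_inj VF EF n H = real (inj_count VF EF n H) / falling n (card VF)"

definition far :: "nat \<Rightarrow> (nat \<Rightarrow> nat set set \<Rightarrow> bool) \<Rightarrow> real \<Rightarrow> nat \<Rightarrow> nat set set \<Rightarrow> bool" where
  "far k P \<alpha> n H \<longleftrightarrow>
     \<not> (\<exists>G. kgraph k {0..<n} G \<and> P n G \<and>
            real (card ((G - H) \<union> (H - G))) \<le> \<alpha> * real (n choose k))"

text \<open>Deterministic adaptive query algorithms: decision trees whose internal
  nodes query whether a set is an edge (first subtree: answer no, second: yes)
  and whose leaves accept (True) or reject (False).\<close>
datatype qtree = Leaf bool | Query "nat set" qtree qtree

fun run :: "qtree \<Rightarrow> nat set set \<Rightarrow> bool" where
  "run (Leaf b) H = b"
| "run (Query e t0 t1) H = (if e \<in> H then run t1 H else run t0 H)"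

fun depth :: "qtree \<Rightarrow> nat" where
  "depth (Leaf b) = 0"
| "depth (Query e t0 t1) = Suc (max (depth t0) (depth t1))"

fun valid_queries :: "nat \<Rightarrow> nat \<Rightarrow> qtree \<Rightarrow> bool" where
  "valid_queries n k (Leaf b) = True"
| "valid_queries n k (Query e t0 t1) =
     (e \<subseteq> {0..<n} \<and> card e = k \<and> valid_queries n k t0 \<and> valid_queries n k t1)"

text \<open>A randomized algorithm is a probability distribution over deterministic
  decision trees; it makes at most q queries if every tree in its support has
  depth at most q.\<close>
definition testable :: "nat \<Rightarrow> (nat \<Rightarrow> nat set set \<Rightarrow> bool) \<Rightarrow> bool" where
  "testable k P \<longleftrightarrow>
     (\<exists>q :: real \<Rightarrow> nat. \<forall>n :: nat. \<forall>\<alpha> :: real. 0 < \<alpha> \<and> \<alpha> < 1 \<longrightarrow>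
        (\<exists>A :: qtree pmf.
           (\<forall>t\<in>set_pmf A. valid_queries n k t \<and> depth t \<le> q \<alpha>) \<and>
           (\<forall>H. kgraph k {0..<n} H \<longrightarrow>
              (P n H \<longrightarrow> measure_pmf.prob A {t. run t H} \<ge> 2/3) \<and>
              (far k P \<alpha> n H \<longrightarrow> measure_pmf.prob A {t. \<not> run t H} \<ge> 2/3))))"

end

theory Submission
  imports Defs
begin


fun mk :: "nat set list \<Rightarrow> (nat set set \<Rightarrow> bool) \<Rightarrow> nat set set \<Rightarrow> qtree" where
  "mk [] g S = Leaf (g S)"
| "mk (e#L) g S = Query e (mk L g S) (mk L g (insert e S))"

lemma run_mk: "run (mk L g S) H = g (S \<union> (H \<inter> set L))"
proof (induction L arbitrary: S)
  case Nil then show ?case by simp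
next
  case (Cons e L)
  show ?case
  proof (cases "e \<in> H")
    case True
    have "insert e S \<union> (H \<inter> set L) = S \<union> (H \<inter> set (e#L))" using True by auto
    then show ?thesis using True Cons by simp
  next
    case False
    have "S \<union> (H \<inter> set L) = S \<union> (H \<inter> set (e#L))" using False by auto
    then show ?thesis using False Cons by simp
  qed
qed

lemma depth_mk: "depth (mk L g S) \<le> length L"
  by (induction L arbitrary: S) (auto simp: max_def)

lemma valid_mk: "(\<forall>e\<in>set L. e \<subseteq> {0..<n} \<and> card e = k) \<Longrightarrow> valid_queries n k (mk L g S)"
  by (induction L arbitrary: S) auto




definition Inj :: "'a set \<Rightarrow> nat \<Rightarrow> ('a \<Rightarrow> nat) set" where
  "Inj VF n = {f \<in> VF \<rightarrow>\<^sub>E {0..<n}. inj_on f VF}"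

lemma finite_Inj: "finite VF \<Longrightarrow> finite (Inj VF n)"
  unfolding Inj_def by (rule finite_subset[of _ "VF \<rightarrow>\<^sub>E {0..<n}"]) (auto intro: finite_PiE)

lemma card_Inj: assumes "finite VF" shows "real (card (Inj VF n)) = falling n (card VF)"
proof -
  have "card (Inj VF n) = card {0..<n} ^ (card VF - card VF) * prod ((-) (card {0..<n})) {0..<card VF}"
    unfolding Inj_def by (rule card_inj_on_subset_funcset) (use assms in auto)
  also have "\<dots> = (\<Prod>i<card VF. n - i)" by (simp add: atLeast0LessThan)
  finally have c: "card (Inj VF n) = (\<Prod>i<card VF. n - i)" .
  show ?thesis
  proof (cases "card VF \<le> n")
    case True
    then have "real (\<Prod>i<card VF. n - i) = (\<Prod>i<card VF. real n - real i)"
      by (simp add: of_nat_prod of_nat_diff)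
    then show ?thesis using c by (simp add: falling_def)
  next
    case False
    then have z: "n \<in> {..<card VF}" by simp
    have "(\<Prod>i<card VF. n - i) = 0" using z by (intro prod_zero) auto
    then have "card (Inj VF n) = 0" using c by simp
    moreover have "(\<Prod>i<card VF. real n - real i) = 0" using z by (intro prod_zero) auto
    ultimately show ?thesis unfolding falling_def by simp
  qed
qed

lemma falling_pos: "card VF \<le> n \<Longrightarrow> falling n (card VF) > 0"
  unfolding falling_def by (intro prod_pos) auto

lemma falling_Suc: "falling n (Suc r) = real n * falling (n - 1) r"
proof (cases n)
  case 0
  have "falling 0 (Suc r) = 0" unfolding falling_def by (rule prod_zero) auto
  then show ?thesis using 0 by simp
next
  case (Suc m)
  then show ?thesis unfolding falling_def prod.lessThan_Suc_shift
    by (simp add: algebra_simps)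
qed

lemma card_Inj_fix:
  assumes "finite VF" "x \<in> VF" "y < n"
  shows "real (card {f \<in> Inj VF n. f x = y}) \<le> falling (n - 1) (card VF - 1)"
proof -
  define R :: "('a \<Rightarrow> nat) \<Rightarrow> 'a \<Rightarrow> nat" where "R = (\<lambda>f. restrict f (VF - {x}))"
  have inj: "inj_on R {f \<in> Inj VF n. f x = y}"
  proof (rule inj_onI)
    fix f g assume f: "f \<in> {f \<in> Inj VF n. f x = y}" and g: "g \<in> {f \<in> Inj VF n. f x = y}"
      and e: "R f = R g"
    show "f = g"
    proof
      fix z
      show "f z = g z"
      proof (cases "z \<in> VF")
        case True
        then show ?thesis using f g e assms(2) unfolding R_def
          by (cases "z = x") (auto dest: fun_cong[of _ _ z])
      next
        case False
        then show ?thesis using f g unfolding Inj_def by (auto simp: PiE_def extensional_def)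
      qed
    qed
  qed
  have sub: "R ` {f \<in> Inj VF n. f x = y} \<subseteq> {f \<in> (VF - {x}) \<rightarrow>\<^sub>E ({0..<n} - {y}). inj_on f (VF - {x})}"
  proof
    fix h assume "h \<in> R ` {f \<in> Inj VF n. f x = y}"
    then obtain f where f: "f \<in> Inj VF n" "f x = y" and h: "h = R f" by auto
    have "\<forall>z\<in>VF - {x}. f z \<noteq> y" using f assms(2) unfolding Inj_def by (auto dest: inj_onD)
    then show "h \<in> {f \<in> (VF - {x}) \<rightarrow>\<^sub>E ({0..<n} - {y}). inj_on f (VF - {x})}"
      using f unfolding h R_def Inj_def by (auto simp: inj_on_def)
  qed
  have fin: "finite {f \<in> (VF - {x}) \<rightarrow>\<^sub>E ({0..<n} - {y}). inj_on f (VF - {x})}"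
    by (rule finite_subset[of _ "(VF - {x}) \<rightarrow>\<^sub>E ({0..<n} - {y})"]) (use assms in \<open>auto intro: finite_PiE\<close>)
  have "card {f \<in> Inj VF n. f x = y} = card (R ` {f \<in> Inj VF n. f x = y})"
    using inj by (simp add: card_image)
  also have "\<dots> \<le> card {f \<in> (VF - {x}) \<rightarrow>\<^sub>E ({0..<n} - {y}). inj_on f (VF - {x})}"
    by (rule card_mono[OF fin sub])
  also have "\<dots> = card ({0..<n} - {y}) ^ (card (VF - {x}) - card (VF - {x})) *
      prod ((-) (card ({0..<n} - {y}))) {0..<card (VF - {x})}"
    by (rule card_inj_on_subset_funcset) (use assms in auto)
  also have "\<dots> = (\<Prod>i<card VF - 1. (n - 1) - i)" using assms by (simp add: atLeast0LessThan)
  finally have c: "card {f \<in> Inj VF n. f x = y} \<le> (\<Prod>i<card VF - 1. (n - 1) - i)" .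
  have "real (\<Prod>i<card VF - 1. (n - 1) - i) \<le> falling (n - 1) (card VF - 1)"
  proof (cases "card VF - 1 \<le> n - 1")
    case True
    have "real (\<Prod>i<card VF - 1. n - 1 - i) = (\<Prod>i<card VF - 1. real (n - 1 - i))"
      by simp
    also have "\<dots> = (\<Prod>i<card VF - 1. real (n - 1) - real i)"
      using True by (intro prod.cong refl) (auto simp: of_nat_diff)
    finally have "real (\<Prod>i<card VF - 1. n - 1 - i) = (\<Prod>i<card VF - 1. real (n - 1) - real i)" .
    then show ?thesis by (simp add: falling_def)
  next
    case False
    then have z: "n - 1 \<in> {..<card VF - 1}" by simp
    have "(\<Prod>i<card VF - 1. n - 1 - i) = 0" using z by (intro prod_zero bexI[of _ "n - 1"]) auto
    moreover have "(\<Prod>i<card VF - 1. real (n-1) - real i) = 0" using z by (intro prod_zero) auto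
    ultimately show ?thesis unfolding falling_def by (metis order.refl of_nat_0)
  qed
  then show ?thesis using c by (meson of_nat_le_iff order_trans)
qed


definition valid :: "'a set set \<Rightarrow> nat set set \<Rightarrow> ('a \<Rightarrow> nat) \<Rightarrow> bool" where
  "valid EF H f \<longleftrightarrow> (\<forall>e\<in>EF. f ` e \<in> H)"

lemma inj_count_eq: "inj_count VF EF n H = card {f \<in> Inj VF n. valid EF H f}"
  unfolding inj_count_def Inj_def valid_def by (rule arg_cong[where f=card]) auto

lemma t_inj_eq: "t_inj VF EF n H = real (card {f \<in> Inj VF n. valid EF H f}) / real (card (Inj VF n))"
  if "finite VF" for VF :: "'a set"
  unfolding t_inj_def inj_count_eq card_Inj[OF that] ..

lemma t_inj_nonneg: "t_inj VF EF n H \<ge> 0" if "finite VF"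
  unfolding t_inj_eq[OF that] by simp

lemma t_inj_le1: "t_inj VF EF n H \<le> 1" if "finite VF"
  unfolding t_inj_eq[OF that]
  using card_mono[OF finite_Inj[OF that], of "{f \<in> Inj VF n. valid EF H f}"]
  by (cases "card (Inj VF n) = 0") (auto simp: divide_le_eq_1)

lemma t_inj_mono: assumes "finite VF" "A \<subseteq> A'" shows "t_inj VF EF n A \<le> t_inj VF EF n A'"
proof -
  have "card {f \<in> Inj VF n. valid EF A f} \<le> card {f \<in> Inj VF n. valid EF A' f}"
    using assms by (intro card_mono) (auto simp: finite_Inj valid_def)
  then show ?thesis unfolding t_inj_eq[OF assms(1)] by (simp add: divide_right_mono)
qed

lemma t_inj_lip:
  assumes fin: "finite VF" and kg: "kgraph k VF EF" and vn: "card VF \<le> n" and v1: "card VF \<ge> 1"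
    and y: "y \<in> e" "e \<subseteq> {0..<n}"
  shows "t_inj VF EF n (insert e A) - t_inj VF EF n A \<le> real (card VF) / real n"
    and "t_inj VF EF n (insert e A) - t_inj VF EF n A \<ge> 0"
proof -
  define S1 where "S1 = {f \<in> Inj VF n. valid EF (insert e A) f}"
  define S0 where "S0 = {f \<in> Inj VF n. valid EF A f}"
  have fin1: "finite S1" unfolding S1_def using finite_Inj[OF fin] by simp
  have sub: "S0 \<subseteq> S1" unfolding S0_def S1_def valid_def by auto
  have yn: "y < n" using y by auto
  have cov: "S1 - S0 \<subseteq> (\<Union>x\<in>VF. {f \<in> Inj VF n. f x = y})"
  proof
    fix f assume f: "f \<in> S1 - S0"
    have v1': "valid EF (insert e A) f" and v0: "\<not> valid EF A f" using f unfolding S0_def S1_def by blast+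
    then obtain e0 where e0: "e0 \<in> EF" "f ` e0 \<notin> A" "f ` e0 \<in> insert e A"
      unfolding valid_def by blast
    then have "f ` e0 = e" by auto
    then obtain x where "x \<in> e0" "f x = y" using y by auto
    moreover have "e0 \<subseteq> VF" using kg e0 unfolding kgraph_def by auto
    moreover have "f \<in> Inj VF n" using f unfolding S1_def by blast
    ultimately show "f \<in> (\<Union>x\<in>VF. {f \<in> Inj VF n. f x = y})" by blast
  qed
  have "card (S1 - S0) \<le> card (\<Union>x\<in>VF. {f \<in> Inj VF n. f x = y})"
  proof (rule card_mono)
    show "finite (\<Union>x\<in>VF. {f \<in> Inj VF n. f x = y})"
      by (rule finite_subset[OF _ finite_Inj[OF fin, of n]]) blast
  qed (rule cov)
  also have "\<dots> \<le> (\<Sum>x\<in>VF. card {f \<in> Inj VF n. f x = y})" by (rule card_UN_le[OF fin])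
  finally have cn: "card (S1 - S0) \<le> (\<Sum>x\<in>VF. card {f \<in> Inj VF n. f x = y})" .
  have "real (card (S1 - S0)) \<le> (\<Sum>x\<in>VF. real (card {f \<in> Inj VF n. f x = y}))"
    unfolding of_nat_sum[symmetric] of_nat_le_iff by (rule cn)
  also have "\<dots> \<le> (\<Sum>x\<in>VF. falling (n - 1) (card VF - 1))"
    by (intro sum_mono card_Inj_fix[OF fin _ yn])
  also have "\<dots> = real (card VF) * falling (n - 1) (card VF - 1)" by simp
  finally have c: "real (card (S1 - S0)) \<le> real (card VF) * falling (n - 1) (card VF - 1)" .
  have fv: "falling n (card VF) = real n * falling (n - 1) (card VF - 1)"
    using falling_Suc[of n "card VF - 1"] v1 by simp
  have fp: "falling (n - 1) (card VF - 1) > 0"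
    unfolding falling_def
  proof (rule prod_pos)
    fix i assume "i \<in> {..<card VF - 1}"
    then have "i < n - 1" using vn by auto
    then show "0 < real (n - 1) - real i" by simp
  qed
  have np: "real n > 0" using vn v1 by simp
  have diff: "t_inj VF EF n (insert e A) - t_inj VF EF n A = real (card (S1 - S0)) / falling n (card VF)"
    unfolding t_inj_def inj_count_eq S0_def[symmetric] S1_def[symmetric]
  proof -
    have "card (S1 - S0) = card S1 - card S0" by (rule card_Diff_subset[OF finite_subset[OF sub fin1] sub])
    then have "real (card (S1 - S0)) = real (card S1) - real (card S0)"
      using card_mono[OF fin1 sub] by (simp add: of_nat_diff)
    then show "real (card S1) / falling n (card VF) - real (card S0) / falling n (card VF) =
      real (card (S1 - S0)) / falling n (card VF)" by (simp add: diff_divide_distrib)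
  qed
  show "t_inj VF EF n (insert e A) - t_inj VF EF n A \<le> real (card VF) / real n"
  proof -
    have "real (card (S1 - S0)) / falling n (card VF) \<le>
       real (card VF) * falling (n - 1) (card VF - 1) / (real n * falling (n - 1) (card VF - 1))"
      unfolding fv using c fp np by (intro divide_right_mono) auto
    also have "\<dots> = real (card VF) / real n" using fp by simp
    finally show ?thesis unfolding diff .
  qed
  show "t_inj VF EF n (insert e A) - t_inj VF EF n A \<ge> 0" unfolding diff fv using fp np by simp
qed




lemma walk:
  fixes g :: "'b set \<Rightarrow> real"
  assumes "finite X" "g {} < a" "g X \<ge> a"
    and "\<And>Y e. Y \<subseteq> X \<Longrightarrow> e \<in> X \<Longrightarrow> g (insert e Y) \<le> g Y + c"
  shows "\<exists>Y\<subseteq>X. a \<le> g Y \<and> g Y \<le> a + c"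
  using assms
proof (induction X rule: finite_induct)
  case empty then show ?case by simp
next
  case (insert x F)
  show ?case
  proof (cases "g F \<ge> a")
    case True
    have "\<exists>Y\<subseteq>F. a \<le> g Y \<and> g Y \<le> a + c"
      using insert.IH[OF insert.prems(1) True] insert.prems(3) by blast
    then show ?thesis by blast
  next
    case False
    have "g (insert x F) \<le> g F + c" using insert.prems(3)[of F x] by blast
    then show ?thesis using False insert.prems(2) by (intro exI[of _ "insert x F"]) auto
  qed
qed

lemma avg_le:
  fixes \<phi> :: "'b \<Rightarrow> real"
  assumes "finite SS" "SS \<noteq> {}" "(\<Sum>X\<in>SS. \<phi> X) \<le> c * real (card SS)"
  shows "\<exists>X\<in>SS. \<phi> X \<le> c"
proof (rule ccontr)
  assume "\<not> ?thesis"
  then have "\<forall>X\<in>SS. c < \<phi> X" by auto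
  then have "(\<Sum>X\<in>SS. c) < (\<Sum>X\<in>SS. \<phi> X)" using assms by (intro sum_strict_mono) auto
  then show False using assms(3) by (simp add: mult.commute)
qed

lemma avg_ge:
  fixes \<phi> :: "'b \<Rightarrow> real"
  assumes "finite SS" "SS \<noteq> {}" "(\<Sum>X\<in>SS. \<phi> X) \<ge> c * real (card SS)"
  shows "\<exists>X\<in>SS. \<phi> X \<ge> c"
  using avg_le[of SS "\<lambda>X. - \<phi> X" "- c"] assms by (auto simp: sum_negf)

lemma double_count:
  assumes "finite SS" "finite I"
  shows "(\<Sum>X\<in>SS. card {f\<in>I. Q f X}) = (\<Sum>f\<in>I. card {X\<in>SS. Q f X})"
proof -
  have c1: "card {f\<in>I. Q f X} = (\<Sum>f\<in>I. if Q f X then 1 else 0)" for X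
    using sum.inter_filter[OF assms(2), of "\<lambda>_. 1::nat" "\<lambda>f. Q f X"] by simp
  have c2: "card {X\<in>SS. Q f X} = (\<Sum>X\<in>SS. if Q f X then 1 else 0)" for f
    using sum.inter_filter[OF assms(1), of "\<lambda>_. 1::nat" "\<lambda>X. Q f X"] by simp
  show ?thesis unfolding c1 c2 by (rule sum.swap)
qed

lemma card_subsets_containing:
  assumes "finite U" "M \<subseteq> U" and that: "card M \<le> s"
  shows "card {X. X \<subseteq> U \<and> card X = s \<and> M \<subseteq> X} = (card U - card M) choose (s - card M)"
proof -
  have finM: "finite M" using assms finite_subset by blast
  have bij: "bij_betw (\<lambda>X. X - M) {X. X \<subseteq> U \<and> card X = s \<and> M \<subseteq> X} {Y. Y \<subseteq> U - M \<and> card Y = s - card M}"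
  proof (rule bij_betw_imageI)
    show "inj_on (\<lambda>X. X - M) {X. X \<subseteq> U \<and> card X = s \<and> M \<subseteq> X}"
      by (rule inj_onI) blast
    show "(\<lambda>X. X - M) ` {X. X \<subseteq> U \<and> card X = s \<and> M \<subseteq> X} = {Y. Y \<subseteq> U - M \<and> card Y = s - card M}"
    proof
      show "(\<lambda>X. X - M) ` {X. X \<subseteq> U \<and> card X = s \<and> M \<subseteq> X} \<subseteq> {Y. Y \<subseteq> U - M \<and> card Y = s - card M}"
        using finM by (auto simp: card_Diff_subset)
      show "{Y. Y \<subseteq> U - M \<and> card Y = s - card M} \<subseteq> (\<lambda>X. X - M) ` {X. X \<subseteq> U \<and> card X = s \<and> M \<subseteq> X}"
      proof
        fix Y assume Y: "Y \<in> {Y. Y \<subseteq> U - M \<and> card Y = s - card M}"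
        have finY: "finite Y" using Y assms(1) finite_subset by blast
        have "card (Y \<union> M) = card Y + card M" using Y finY finM by (intro card_Un_disjoint) auto
        then have "card (Y \<union> M) = s" using Y that by simp
        moreover have "Y = (Y \<union> M) - M" using Y by auto
        ultimately show "Y \<in> (\<lambda>X. X - M) ` {X. X \<subseteq> U \<and> card X = s \<and> M \<subseteq> X}"
          using Y assms by blast
      qed
    qed
  qed
  have "card {X. X \<subseteq> U \<and> card X = s \<and> M \<subseteq> X} = card {Y. Y \<subseteq> U - M \<and> card Y = s - card M}"
    by (rule bij_betw_same_card[OF bij])
  also have "\<dots> = card (U - M) choose (s - card M)" using assms by (intro n_subsets) auto
  also have "card (U - M) = card U - card M" using assms finM by (simp add: card_Diff_subset)
  finally show ?thesis .
qed

lemma binom_ratio: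
  "m \<le> s \<Longrightarrow> s \<le> N \<Longrightarrow> (N choose s) * (s - m) ^ m \<le> ((N - m) choose (s - m)) * N ^ m"
proof (induction m arbitrary: N s)
  case 0 then show ?case by simp
next
  case (Suc m)
  obtain N' s' where N: "N = Suc N'" and s: "s = Suc s'" using Suc.prems
    by (metis Suc_le_D le_trans)
  have IH: "(N' choose s') * (s' - m) ^ m \<le> ((N' - m) choose (s' - m)) * N' ^ m"
    using Suc.prems N s by (intro Suc.IH) auto
  have step: "(N choose s) * s = (N' choose s') * N"
  proof -
    have "Suc N' * (N' choose s') = (Suc N' choose Suc s') * Suc s'" by (rule Suc_times_binomial_eq)
    then show ?thesis unfolding N s by (metis mult.commute)
  qed
  have "(N choose s) * (s - Suc m) ^ Suc m = (N choose s) * (s - Suc m) * (s' - m) ^ m"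
    using s by simp
  also have "\<dots> \<le> (N choose s) * s * (s' - m) ^ m" by (intro mult_le_mono) auto
  also have "\<dots> = N * ((N' choose s') * (s' - m) ^ m)" using step by (simp add: ac_simps)
  also have "\<dots> \<le> N * (((N' - m) choose (s' - m)) * N' ^ m)" using IH by simp
  also have "\<dots> \<le> N * (((N' - m) choose (s' - m)) * N ^ m)" using N by (intro mult_le_mono power_mono) auto
  also have "\<dots> = ((N - Suc m) choose (s - Suc m)) * N ^ Suc m" using N s by (simp add: algebra_simps)
  finally show ?case .
qed




lemma valid_mono: "valid EF A f \<Longrightarrow> A \<subseteq> B \<Longrightarrow> valid EF B f"
  unfolding valid_def by auto

lemma dec_lemma:
  assumes fin: "finite VF" and vn: "card VF \<le> n" and EF: "EF \<noteq> {}"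
    and finH: "finite H" and s: "s \<le> card H"
  shows "\<exists>X\<subseteq>H. card X = s \<and>
     t_inj VF EF n (H - X) \<le> t_inj VF EF n H * (1 - real s / real (card H))"
proof (cases "card H = 0")
  case True
  then show ?thesis using s by (intro exI[of _ "{}"]) auto
next
  case False
  define h where "h = card H"
  have hp: "h > 0" using False h_def by simp
  define I where "I = Inj VF n"
  have finI: "finite I" unfolding I_def by (rule finite_Inj[OF fin])
  define SS where "SS = {X. X \<subseteq> H \<and> card X = s}"
  have cSS: "card SS = h choose s" unfolding SS_def h_def by (rule n_subsets[OF finH])
  have finSS: "finite SS" unfolding SS_def using finH by (simp add: finite_Collect_subsets)
  have neSS: "SS \<noteq> {}" using cSS s h_def by (auto simp: zero_less_binomial_iff)
  define iH where "iH = card {f\<in>I. valid EF H f}"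
  obtain e0 where e0: "e0 \<in> EF" using EF by blast
  have each: "card {X\<in>SS. valid EF (H - X) f} \<le> (if valid EF H f then (h - 1) choose s else 0)"
    if "f \<in> I" for f
  proof (cases "valid EF H f")
    case True
    have E: "f ` e0 \<in> H" using True e0 unfolding valid_def by auto
    have "{X\<in>SS. valid EF (H - X) f} \<subseteq> {X. X \<subseteq> H - {f ` e0} \<and> card X = s}"
      unfolding SS_def valid_def using e0 by auto
    then have "card {X\<in>SS. valid EF (H - X) f} \<le> card {X. X \<subseteq> H - {f ` e0} \<and> card X = s}"
      using finH by (intro card_mono) (auto simp: finite_Collect_subsets)
    also have "\<dots> = card (H - {f ` e0}) choose s" using finH by (intro n_subsets) auto
    also have "card (H - {f ` e0}) = h - 1" using E finH h_def by simp
    finally show ?thesis using True by simp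
  next
    case False
    have "{X\<in>SS. valid EF (H - X) f} = {}" using False valid_mono[of EF _ f H] by auto
    then show ?thesis using False by (simp only: card.empty if_False order.refl)
  qed
  have "(\<Sum>X\<in>SS. card {f\<in>I. valid EF (H - X) f}) = (\<Sum>f\<in>I. card {X\<in>SS. valid EF (H - X) f})"
    by (rule double_count[OF finSS finI])
  also have "\<dots> \<le> (\<Sum>f\<in>I. if valid EF H f then (h - 1) choose s else 0)"
    by (intro sum_mono each)
  also have "\<dots> = iH * ((h - 1) choose s)"
    unfolding iH_def using finI by (simp add: sum.If_cases Int_def)
  finally have S: "(\<Sum>X\<in>SS. card {f\<in>I. valid EF (H - X) f}) \<le> iH * ((h - 1) choose s)" .
  have ab: "real ((h - 1) choose s) = real (h choose s) * (real h - real s) / real h"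
  proof -
    have "(h - s) * (h choose s) = h * ((h - 1) choose s)" by (rule binomial_absorb_comp)
    then have "real ((h - s) * (h choose s)) = real (h * ((h - 1) choose s))"
      by (simp only:)
    then have "real (h - s) * real (h choose s) = real h * real ((h - 1) choose s)"
      by (simp only: of_nat_mult)
    then show ?thesis using hp s h_def by (simp add: field_simps of_nat_diff)
  qed
  have "(\<Sum>X\<in>SS. real (card {f\<in>I. valid EF (H - X) f})) \<le> real iH * real ((h - 1) choose s)"
    unfolding of_nat_sum[symmetric] of_nat_mult[symmetric] of_nat_le_iff by (rule S)
  also have "\<dots> = (real iH * (1 - real s / real h)) * real (card SS)"
    unfolding ab cSS using hp by (simp add: field_simps)
  finally obtain X where X: "X \<in> SS" and Xle: "real (card {f\<in>I. valid EF (H - X) f}) \<le> real iH * (1 - real s / real h)"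
    using avg_le[OF finSS neSS] by blast
  have "t_inj VF EF n (H - X) \<le> t_inj VF EF n H * (1 - real s / real h)"
    unfolding t_inj_eq[OF fin] I_def[symmetric] iH_def[symmetric]
    using Xle by (simp add: divide_right_mono)
  then show ?thesis using X unfolding SS_def h_def by blast
qed


lemma finite_EF: "finite VF \<Longrightarrow> kgraph k VF EF \<Longrightarrow> finite EF"
  unfolding kgraph_def by (rule finite_subset[of _ "Pow VF"]) auto

lemma img_in_K:
  assumes kg: "kgraph k VF EF" and f: "f \<in> Inj VF n" and e0: "e0 \<in> EF"
  shows "f ` e0 \<in> {e. e \<subseteq> {0..<n} \<and> card e = k}"
proof -
  have sub: "e0 \<subseteq> VF" and ck: "card e0 = k" using kg e0 unfolding kgraph_def by auto
  have "inj_on f e0" using f sub unfolding Inj_def by (auto intro: inj_on_subset)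
  then have "card (f ` e0) = k" using ck by (simp add: card_image)
  moreover have "f ` e0 \<subseteq> {0..<n}" using f sub unfolding Inj_def by auto
  ultimately show ?thesis by simp
qed

lemma inc_lemma:
  assumes fin: "finite VF" and kg: "kgraph k VF EF" and vn: "card VF \<le> n" and EF: "EF \<noteq> {}"
    and HK: "H \<subseteq> {e. e \<subseteq> {0..<n} \<and> card e = k}"
    and s1: "card EF \<le> s" and s2: "s \<le> card ({e. e \<subseteq> {0..<n} \<and> card e = k} - H)"
  shows "\<exists>X\<subseteq>{e. e \<subseteq> {0..<n} \<and> card e = k} - H. card X = s \<and>
     t_inj VF EF n (H \<union> X) \<ge> t_inj VF EF n H + (1 - t_inj VF EF n H) *
        ((real s - real (card EF)) / real (card {e. e \<subseteq> {0..<n} \<and> card e = k})) ^ card EF"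
proof -
  define K where "K = {e. e \<subseteq> {0..<n} \<and> card e = k}"
  define U where "U = K - H"
  define N where "N = card U"
  define E where "E = card EF"
  define \<rho> where "\<rho> = ((real s - real E) / real (card K)) ^ E"
  have finK: "finite K" unfolding K_def by (rule finite_subset[of _ "Pow {0..<n}"]) auto
  have finU: "finite U" unfolding U_def using finK by simp
  have finEF: "finite EF" by (rule finite_EF[OF fin kg])
  have E1: "E \<ge> 1" using EF finEF E_def by (simp add: Suc_le_eq card_gt_0_iff)
  have sN: "s \<le> N" using s2 unfolding N_def U_def K_def .
  have NK: "N \<le> card K" unfolding N_def U_def using finK by (simp add: card_mono)
  have Npos: "N > 0" using sN s1 E1 E_def by simp
  define I where "I = Inj VF n"
  have finI: "finite I" unfolding I_def by (rule finite_Inj[OF fin])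
  have Ipos: "card I > 0"
  proof -
    have "real (card I) > 0" unfolding I_def card_Inj[OF fin] by (rule falling_pos[OF vn])
    then show ?thesis by simp
  qed
  define SS where "SS = {X. X \<subseteq> U \<and> card X = s}"
  have cSS: "card SS = N choose s" unfolding SS_def N_def by (rule n_subsets[OF finU])
  have finSS: "finite SS" unfolding SS_def using finU by (simp add: finite_Collect_subsets)
  have neSS: "SS \<noteq> {}" using cSS sN by (auto simp: zero_less_binomial_iff)
  define M where "M = (\<lambda>f. (\<lambda>e0. f ` e0) ` EF - H)"
  have MU: "M f \<subseteq> U" if "f \<in> I" for f
    using img_in_K[OF kg, of f n] that unfolding M_def U_def K_def I_def by auto
  have cM: "card (M f) \<le> E" for f
  proof -
    have "card (M f) \<le> card ((\<lambda>e0. f ` e0) ` EF)" unfolding M_def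
      using finEF by (intro card_mono) auto
    also have "\<dots> \<le> E" unfolding E_def using finEF by (rule card_image_le)
    finally show ?thesis .
  qed
  have vX: "valid EF (H \<union> X) f \<longleftrightarrow> M f \<subseteq> X" if "X \<subseteq> U" for f X
    using that unfolding valid_def M_def U_def by auto
  have \<rho>0: "0 \<le> (real s - real E) / real (card K)" using s1 E_def by simp
  have \<rho>1: "(real s - real E) / real (card K) \<le> 1" using sN NK Npos by (simp add: divide_le_eq_1)
  have each: "real (card {X\<in>SS. valid EF (H \<union> X) f}) \<ge>
      (if valid EF H f then real (N choose s) else real (N choose s) * \<rho>)" if f: "f \<in> I" for f
  proof -
    define m where "m = card (M f)"
    have "{X\<in>SS. valid EF (H \<union> X) f} = {X. X \<subseteq> U \<and> card X = s \<and> M f \<subseteq> X}"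
      unfolding SS_def using vX by auto
    then have c: "card {X\<in>SS. valid EF (H \<union> X) f} = (N - m) choose (s - m)"
      unfolding N_def m_def using cM[of f] s1 E_def
      by (simp add: card_subsets_containing[OF finU MU[OF f]])
    have ms: "m \<le> s" using cM[of f] s1 E_def m_def by simp
    have br: "(N choose s) * (s - m) ^ m \<le> ((N - m) choose (s - m)) * N ^ m"
      by (rule binom_ratio[OF ms sN])
    then have "real ((N choose s) * (s - m) ^ m) \<le> real (((N - m) choose (s - m)) * N ^ m)"
      by (simp only: of_nat_le_iff)
    then have "real (N choose s) * real (s - m) ^ m \<le> real ((N - m) choose (s - m)) * real N ^ m"
      by (simp only: of_nat_mult of_nat_power)
    then have lb: "real (N choose s) * (real (s - m) / real N) ^ m \<le> real ((N - m) choose (s - m))"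
      using Npos by (simp add: power_divide field_simps)
    have "\<rho> \<le> (real (s - m) / real N) ^ m"
    proof -
      have "\<rho> \<le> ((real s - real E) / real (card K)) ^ m"
        unfolding \<rho>_def using \<rho>0 \<rho>1 cM[of f] m_def by (intro power_decreasing) auto
      also have "\<dots> \<le> (real (s - m) / real N) ^ m"
      proof (intro power_mono \<rho>0)
        have "(real s - real E) / real (card K) \<le> (real s - real E) / real N"
          using Npos NK s1 E_def by (intro divide_left_mono) auto
        also have "\<dots> \<le> real (s - m) / real N"
          using ms cM[of f] m_def Npos by (intro divide_right_mono) (auto simp: of_nat_diff)
        finally show "(real s - real E) / real (card K) \<le> real (s - m) / real N" .
      qed
      finally show ?thesis .
    qed
    then have "real (N choose s) * \<rho> \<le> real ((N - m) choose (s - m))"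
      using lb by (meson mult_left_mono of_nat_0_le_iff order_trans)
    moreover have "valid EF H f \<Longrightarrow> m = 0"
    proof -
      assume "valid EF H f"
      then have "M f = {}" unfolding M_def valid_def by auto
      then show "m = 0" unfolding m_def by simp
    qed
    ultimately show ?thesis using c by auto
  qed
  define iH where "iH = card {f\<in>I. valid EF H f}"
  have iHI: "iH \<le> card I" unfolding iH_def using finI by (intro card_mono) auto
  have "(\<Sum>X\<in>SS. real (card {f\<in>I. valid EF (H \<union> X) f})) =
        real (\<Sum>X\<in>SS. card {f\<in>I. valid EF (H \<union> X) f})" by simp
  also have "(\<Sum>X\<in>SS. card {f\<in>I. valid EF (H \<union> X) f}) = (\<Sum>f\<in>I. card {X\<in>SS. valid EF (H \<union> X) f})"
    by (rule double_count[OF finSS finI])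
  also have "real \<dots> = (\<Sum>f\<in>I. real (card {X\<in>SS. valid EF (H \<union> X) f}))" by simp
  also have "\<dots> \<ge> (\<Sum>f\<in>I. if valid EF H f then real (N choose s) else real (N choose s) * \<rho>)"
    by (intro sum_mono each)
  finally have S: "(\<Sum>X\<in>SS. real (card {f\<in>I. valid EF (H \<union> X) f})) \<ge>
      (\<Sum>f\<in>I. if valid EF H f then real (N choose s) else real (N choose s) * \<rho>)" .
  have "(\<Sum>f\<in>I. if valid EF H f then real (N choose s) else real (N choose s) * \<rho>) =
      real iH * real (N choose s) + real (card I - iH) * (real (N choose s) * \<rho>)"
  proof -
    have "card {f\<in>I. \<not> valid EF H f} = card I - iH"
    proof -
      have "{f\<in>I. \<not> valid EF H f} = I - {f\<in>I. valid EF H f}" by blast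
      moreover have "card (I - {f\<in>I. valid EF H f}) = card I - card {f\<in>I. valid EF H f}"
        using finI by (intro card_Diff_subset) auto
      ultimately show ?thesis unfolding iH_def by simp
    qed
    then show ?thesis using finI unfolding iH_def by (simp add: sum.If_cases Int_def)
  qed
  also have "\<dots> = (real iH + (real (card I) - real iH) * \<rho>) * real (card SS)"
    unfolding cSS using iHI by (simp add: of_nat_diff algebra_simps)
  finally have S2: "(real iH + (real (card I) - real iH) * \<rho>) * real (card SS) \<le>
      (\<Sum>X\<in>SS. real (card {f\<in>I. valid EF (H \<union> X) f}))" using S by linarith
  obtain X where X: "X \<in> SS" and Xge:
    "real (card {f\<in>I. valid EF (H \<union> X) f}) \<ge> real iH + (real (card I) - real iH) * \<rho>"
    using avg_ge[OF finSS neSS S2] by blast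
  have tH: "t_inj VF EF n H = real iH / real (card I)"
    unfolding t_inj_eq[OF fin] I_def iH_def ..
  have "t_inj VF EF n (H \<union> X) \<ge> (real iH + (real (card I) - real iH) * \<rho>) / real (card I)"
    unfolding t_inj_eq[OF fin] I_def[symmetric] using Xge Ipos by (simp add: divide_right_mono)
  also have "(real iH + (real (card I) - real iH) * \<rho>) / real (card I) =
      t_inj VF EF n H + (1 - t_inj VF EF n H) * \<rho>"
    unfolding tH using Ipos by (simp add: field_simps)
  finally show ?thesis using X unfolding SS_def U_def K_def \<rho>_def E_def by blast
qed




definition gam :: "real \<Rightarrow> real \<Rightarrow> nat \<Rightarrow> real" where
  "gam p \<alpha> E = min (p * \<alpha> / 4) ((1 - p) * (\<alpha> / 2) ^ E / 2)"

lemma t_inj_empty: assumes "finite VF" "EF \<noteq> {}" shows "t_inj VF EF n {} = 0"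
proof -
  have "{f \<in> Inj VF n. valid EF {} f} = {}" using assms unfolding valid_def by auto
  then have "card {f \<in> Inj VF n. valid EF {} f} = 0" by (simp only: card.empty)
  then show ?thesis unfolding t_inj_eq[OF assms(1)] by simp
qed

lemma t_inj_full: assumes "finite VF" "kgraph k VF EF" "card VF \<le> n"
  shows "t_inj VF EF n {e. e \<subseteq> {0..<n} \<and> card e = k} = 1"
proof -
  have "{f \<in> Inj VF n. valid EF {e. e \<subseteq> {0..<n} \<and> card e = k} f} = Inj VF n"
    using img_in_K[OF assms(2)] unfolding valid_def by blast
  moreover have "real (card (Inj VF n)) > 0" unfolding card_Inj[OF assms(1)] by (rule falling_pos[OF assms(3)])
  ultimately show ?thesis unfolding t_inj_eq[OF assms(1)] by simp
qed

lemma close_lemma: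
  fixes VF :: "'a set"
  assumes fin: "finite VF" and kg: "kgraph k VF EF" and EF: "EF \<noteq> {}" and k2: "k \<ge> 2"
    and p: "0 < p" "p < 1" and \<delta>: "0 < \<delta>" and \<alpha>: "0 < \<alpha>" "\<alpha> < 1"
    and vn: "card VF \<le> n" and vn2: "real (card VF) / real n \<le> 2 * \<delta>"
    and B: "\<alpha> * real (n choose k) \<ge> 2 * (real (card EF) + 1)"
    and HK: "H \<subseteq> {e. e \<subseteq> {0..<n} \<and> card e = k}"
    and tH: "\<bar>t_inj VF EF n H - p\<bar> \<le> \<delta> + 2 * gam p \<alpha> (card EF)"
  shows "\<exists>G\<subseteq>{e. e \<subseteq> {0..<n} \<and> card e = k}. \<bar>t_inj VF EF n G - p\<bar> \<le> \<delta> \<and>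
     real (card ((G - H) \<union> (H - G))) \<le> \<alpha> * real (n choose k)"
proof -
  define K where "K = {e. e \<subseteq> {0..<n} \<and> card e = k}"
  define t where "t = t_inj VF EF n"
  define E where "E = card EF"
  define Bn where "Bn = n choose k"
  define c where "c = real (card VF) / real n"
  have finK: "finite K" unfolding K_def by (rule finite_subset[of _ "Pow {0..<n}"]) auto
  have cK: "card K = Bn" unfolding K_def Bn_def using n_subsets[of "{0..<n}" k] by simp
  have finEF: "finite EF" by (rule finite_EF[OF fin kg])
  have E1: "E \<ge> 1" using EF finEF E_def by (simp add: Suc_le_eq card_gt_0_iff)
  obtain e0 where e0: "e0 \<in> EF" using EF by blast
  have v1: "card VF \<ge> 1"
  proof -
    have "e0 \<subseteq> VF" "card e0 = k" using kg e0 unfolding kgraph_def by auto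
    then have "k \<le> card VF" using fin card_mono by blast
    then show ?thesis using k2 by simp
  qed
  have Bpos: "real Bn > 0"
  proof (rule ccontr)
    assume "\<not> real Bn > 0"
    then have "real Bn = 0" by simp
    then have "\<alpha> * real (n choose k) = 0" using Bn_def by simp
    moreover have "real (card EF) \<ge> 0" by simp
    ultimately show False using B by (smt (verit))
  qed
  define s where "s = nat \<lfloor>\<alpha> * real Bn\<rfloor>"
  have s_le: "real s \<le> \<alpha> * real Bn" unfolding s_def using \<alpha> Bpos by simp
  have s_ge: "real s \<ge> \<alpha> * real Bn - 1" unfolding s_def using \<alpha> Bpos by linarith
  have BE: "\<alpha> * real Bn \<ge> 2 * (real E + 1)" using B unfolding Bn_def E_def .
  have g1: "2 * gam p \<alpha> E \<le> p * \<alpha> / 2" unfolding gam_def by simp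
  have g2: "2 * gam p \<alpha> E \<le> (1 - p) * (\<alpha> / 2) ^ E" unfolding gam_def by simp
  have lip: "t (insert e A) - t A \<le> c" "t (insert e A) - t A \<ge> 0" if "e \<in> K" for e A
  proof -
    have ck: "card e = k" "e \<subseteq> {0..<n}" using that unfolding K_def by auto
    then have "e \<noteq> {}" using k2 by auto
    then obtain y where "y \<in> e" by blast
    then show "t (insert e A) - t A \<le> c" "t (insert e A) - t A \<ge> 0"
      unfolding t_def c_def using t_inj_lip[OF fin kg vn v1 _ ck(2)] by auto
  qed
  have cd: "c \<le> 2 * \<delta>" using vn2 c_def by simp
  have finH: "finite H" using HK finK K_def finite_subset by blast
  have main: "\<exists>G\<subseteq>K. \<bar>t G - p\<bar> \<le> \<delta> \<and> real (card ((G - H) \<union> (H - G))) \<le> \<alpha> * real Bn"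
  proof (cases "\<bar>t H - p\<bar> \<le> \<delta>")
    case True
    have "(H - H) \<union> (H - H) = {}" by simp
    then show ?thesis using True HK \<alpha> Bpos K_def by (intro exI[of _ H]) auto
  next
    case False
    show ?thesis
    proof (cases "t H > p + \<delta>")
      case up: True
      obtain X where XH: "X \<subseteq> H" and Xs: "real (card X) \<le> \<alpha> * real Bn" and tX: "t (H - X) \<le> p + \<delta>"
      proof (cases "s \<le> card H")
        case True
        obtain X where X: "X \<subseteq> H" "card X = s" and tX: "t (H - X) \<le> t H * (1 - real s / real (card H))"
          using dec_lemma[OF fin vn EF finH True] unfolding t_def by blast
        have hB: "card H \<le> Bn" using HK finK cK card_mono K_def by metis
        have "real s > 0" using s_ge BE E1 by simp
        then have hpos: "card H > 0" using True by simp
        have tHp: "t H \<ge> 0" unfolding t_def by (rule t_inj_nonneg[OF fin])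
        have "real s / real (card H) \<ge> real s / real Bn"
          using hB hpos by (intro divide_left_mono) auto
        moreover have "real s / real Bn \<ge> \<alpha> / 2"
        proof -
          have "\<alpha> * real Bn - 1 \<ge> \<alpha> * real Bn / 2" using BE by simp
          then have "real s \<ge> \<alpha> / 2 * real Bn" using s_ge by simp
          then show ?thesis using Bpos by (simp add: field_simps)
        qed
        ultimately have "1 - real s / real (card H) \<le> 1 - \<alpha> / 2" by linarith
        then have "t H * (1 - real s / real (card H)) \<le> t H * (1 - \<alpha> / 2)"
          using tHp by (intro mult_left_mono) auto
        also have "\<dots> = t H - t H * \<alpha> / 2" by (simp add: algebra_simps)
        also have "\<dots> \<le> t H - p * \<alpha> / 2"
        proof -
          have "p * \<alpha> \<le> t H * \<alpha>" using up \<delta> \<alpha> by (intro mult_right_mono) auto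
          then show ?thesis by linarith
        qed
        also have "\<dots> \<le> p + \<delta>" using tH g1 unfolding t_def E_def by linarith
        finally have "t (H - X) \<le> p + \<delta>" using tX by linarith
        then show ?thesis by (intro that[of X]) (use X s_le in auto)
      next
        case False
        have "t (H - H) = 0" unfolding t_def using t_inj_empty[OF fin EF] by simp
        then show ?thesis using False s_le p \<delta> by (intro that[of H]) auto
      qed
      have finX: "finite X" using XH finH finite_subset by blast
      have "\<exists>Y\<subseteq>X. - (p + \<delta>) \<le> - t (H - Y) \<and> - t (H - Y) \<le> - (p + \<delta>) + c"
      proof (rule walk[OF finX])
        show "- t (H - {}) < - (p + \<delta>)" using up by simp
        show "- (p + \<delta>) \<le> - t (H - X)" using tX by simp
        fix Y e assume Y: "Y \<subseteq> X" "e \<in> X"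
        show "- t (H - insert e Y) \<le> - t (H - Y) + c"
        proof (cases "e \<in> Y")
          case True
          have "c \<ge> 0" unfolding c_def by simp
          then show ?thesis using True by (simp add: insert_absorb)
        next
          case False
          have "H - Y = insert e (H - insert e Y)" using False Y XH by auto
          moreover have "e \<in> K" using Y XH HK K_def by auto
          ultimately show ?thesis using lip(1)[of e "H - insert e Y"] by simp
        qed
      qed
      then obtain Y where Y: "Y \<subseteq> X" "- (p + \<delta>) \<le> - t (H - Y)" "- t (H - Y) \<le> - (p + \<delta>) + c"
        by blast
      have "(H - Y - H) \<union> (H - (H - Y)) = Y" using Y XH by blast
      moreover have "card Y \<le> card X" using Y finX card_mono by blast
      moreover have "H - Y \<subseteq> K" using HK K_def by blast
      moreover have "\<bar>t (H - Y) - p\<bar> \<le> \<delta>" using Y cd by (simp add: abs_le_iff)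
      ultimately show ?thesis using Xs by (intro exI[of _ "H - Y"]) auto
    next
      case down: False
      then have low: "t H < p - \<delta>" using False by linarith
      define U where "U = K - H"
      have finU: "finite U" unfolding U_def using finK by simp
      obtain X where XU: "X \<subseteq> U" and Xs: "real (card X) \<le> \<alpha> * real Bn" and tX: "t (H \<union> X) \<ge> p - \<delta>"
      proof (cases "s \<le> card U")
        case True
        have "real E \<le> real s" using s_ge BE by (smt (verit) of_nat_0_le_iff)
        then have sE: "E \<le> s" by simp
        obtain X where X: "X \<subseteq> U" "card X = s" and tX: "t (H \<union> X) \<ge> t H + (1 - t H) *
            ((real s - real E) / real Bn) ^ E"
          using inc_lemma[OF fin kg vn EF HK sE[unfolded E_def] True[unfolded U_def K_def]]
          unfolding t_def E_def U_def K_def cK[unfolded K_def] by blast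
        have r: "(real s - real E) / real Bn \<ge> \<alpha> / 2"
        proof -
          have "real s - real E \<ge> \<alpha> / 2 * real Bn" using s_ge BE by simp
          then show ?thesis using Bpos by (simp add: field_simps)
        qed
        have "((real s - real E) / real Bn) ^ E \<ge> (\<alpha> / 2) ^ E"
          using r \<alpha> by (intro power_mono) auto
        moreover have "1 - t H \<ge> 1 - p" using low \<delta> by simp
        ultimately have "(1 - t H) * ((real s - real E) / real Bn) ^ E \<ge> (1 - p) * (\<alpha> / 2) ^ E"
          using p \<alpha> by (intro mult_mono) auto
        then have "t (H \<union> X) \<ge> p - \<delta>" using tX tH g2 unfolding t_def E_def by linarith
        then show ?thesis by (intro that[of X]) (use X s_le in auto)
      next
        case False
        have "H \<union> U = K" unfolding U_def using HK K_def by auto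
        then have "t (H \<union> U) = 1" unfolding t_def K_def using t_inj_full[OF fin kg vn] by simp
        then show ?thesis using False s_le p \<delta> by (intro that[of U]) auto
      qed
      have finX: "finite X" using XU finU finite_subset by blast
      have "\<exists>Y\<subseteq>X. p - \<delta> \<le> t (H \<union> Y) \<and> t (H \<union> Y) \<le> p - \<delta> + c"
      proof (rule walk[OF finX])
        show "t (H \<union> {}) < p - \<delta>" using low by simp
        show "p - \<delta> \<le> t (H \<union> X)" using tX by simp
        fix Y e assume Y: "Y \<subseteq> X" "e \<in> X"
        have "H \<union> insert e Y = insert e (H \<union> Y)" by auto
        moreover have "e \<in> K" using Y XU U_def by auto
        ultimately show "t (H \<union> insert e Y) \<le> t (H \<union> Y) + c" using lip(1)[of e "H \<union> Y"] by simp
      qed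
      then obtain Y where Y: "Y \<subseteq> X" "p - \<delta> \<le> t (H \<union> Y)" "t (H \<union> Y) \<le> p - \<delta> + c" by blast
      have "(H \<union> Y - H) \<union> (H - (H \<union> Y)) = Y" using Y XU U_def by blast
      moreover have "card Y \<le> card X" using Y finX card_mono by blast
      moreover have "H \<union> Y \<subseteq> K" using HK Y XU U_def K_def by blast
      moreover have "\<bar>t (H \<union> Y) - p\<bar> \<le> \<delta>" using Y cd \<delta> by (simp add: abs_le_iff)
      ultimately show ?thesis using Xs by (intro exI[of _ "H \<union> Y"]) auto
    qed
  qed
  then show ?thesis unfolding K_def t_def Bn_def .
qed




lemma map_pmf_bernoulli:
  fixes V :: "'b \<Rightarrow> bool"
  assumes "finite I" "I \<noteq> {}"
  shows "map_pmf V (pmf_of_set I) = bernoulli_pmf (real (card {f\<in>I. V f}) / real (card I))"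
proof -
  define q where "q = real (card {f\<in>I. V f}) / real (card I)"
  have cI: "real (card I) > 0" using assms by (simp add: card_gt_0_iff)
  have c1: "card {f\<in>I. V f} \<le> card I" using assms(1) by (intro card_mono) auto
  have q0: "0 \<le> q" and q1: "q \<le> 1" unfolding q_def using cI c1 by (auto simp: divide_le_eq_1)
  have pT: "pmf (map_pmf V (pmf_of_set I)) True = q"
    unfolding pmf_map q_def using assms
    by (simp add: measure_pmf_of_set Int_def vimage_def)
  show ?thesis unfolding q_def[symmetric]
  proof (rule pmf_eqI)
    fix b :: bool
    show "pmf (map_pmf V (pmf_of_set I)) b = pmf (bernoulli_pmf q) b"
    proof (cases b)
      case True then show ?thesis using pT q0 q1 by simp
    next
      case False
      have "pmf (map_pmf V (pmf_of_set I)) False = 1 - pmf (map_pmf V (pmf_of_set I)) True"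
        using pmf_False_conv_True by blast
      then show ?thesis using False pT q0 q1 by simp
    qed
  qed
qed

definition queries :: "'a set list \<Rightarrow> nat \<Rightarrow> (nat \<Rightarrow> 'a \<Rightarrow> nat) \<Rightarrow> nat set list" where
  "queries EL m fs = concat (map (\<lambda>i. map (\<lambda>e. fs i ` e) EL) [0..<m])"

definition cnt :: "'a set set \<Rightarrow> nat \<Rightarrow> (nat \<Rightarrow> 'a \<Rightarrow> nat) \<Rightarrow> nat set set \<Rightarrow> nat" where
  "cnt EF m fs S = card {i\<in>{..<m}. valid EF S (fs i)}"

definition samp_alg :: "'a set \<Rightarrow> 'a set list \<Rightarrow> nat \<Rightarrow> nat \<Rightarrow> (nat \<Rightarrow> bool) \<Rightarrow> qtree pmf" where
  "samp_alg VF EL n m r = map_pmf (\<lambda>fs. mk (queries EL m fs) (\<lambda>S. r (cnt (set EL) m fs S)) {})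
      (Pi_pmf {..<m} (SOME f. f \<in> Inj VF n) (\<lambda>_. pmf_of_set (Inj VF n)))"

lemma Inj_ne: "card VF \<le> n \<Longrightarrow> finite VF \<Longrightarrow> Inj VF n \<noteq> {}"
  using falling_pos[of VF n] card_Inj[of VF n] by auto

lemma samp_support:
  assumes fin: "finite VF" and kg: "kgraph k VF (set EL)" and vn: "card VF \<le> n"
    and t: "t \<in> set_pmf (samp_alg VF EL n m r)"
  shows "valid_queries n k t \<and> depth t \<le> m * length EL"
proof -
  define I where "I = Inj VF n"
  have ne: "I \<noteq> {}" unfolding I_def by (rule Inj_ne[OF vn fin])
  have finI: "finite I" unfolding I_def by (rule finite_Inj[OF fin])
  obtain fs where fs: "fs \<in> set_pmf (Pi_pmf {..<m} (SOME f. f \<in> I) (\<lambda>_. pmf_of_set I))"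
    and t: "t = mk (queries EL m fs) (\<lambda>S. r (cnt (set EL) m fs S)) {}"
    using t unfolding samp_alg_def I_def by auto
  have fsI: "fs i \<in> I" if "i < m" for i
    using fs that ne finI by (auto simp: set_Pi_pmf PiE_dflt_def)
  have "\<forall>e\<in>set (queries EL m fs). e \<subseteq> {0..<n} \<and> card e = k"
  proof
    fix e assume "e \<in> set (queries EL m fs)"
    then obtain i e0 where i: "i < m" "e0 \<in> set EL" "e = fs i ` e0" unfolding queries_def by auto
    show "e \<subseteq> {0..<n} \<and> card e = k"
      using img_in_K[OF kg fsI[OF i(1), unfolded I_def] i(2)] i(3) by simp
  qed
  moreover have "length (queries EL m fs) = m * length EL"
    unfolding queries_def by (simp add: length_concat comp_def sum_list_triv)
  ultimately show ?thesis unfolding t using depth_mk valid_mk by metis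
qed

lemma samp_prob:
  fixes VF :: "'a set"
  assumes fin: "finite VF" and vn: "card VF \<le> n"
  shows "measure_pmf.prob (samp_alg VF EL n m r) {t. Q (run t H)} =
    measure_pmf.prob (binomial_pmf m (t_inj VF (set EL) n H)) {x. Q (r x)}"
proof -
  define I where "I = Inj VF n"
  have ne: "I \<noteq> {}" unfolding I_def by (rule Inj_ne[OF vn fin])
  have finI: "finite I" unfolding I_def by (rule finite_Inj[OF fin])
  define f0 where "f0 = (SOME f. f \<in> I)"
  define D where "D = Pi_pmf {..<m} f0 (\<lambda>_. pmf_of_set I)"
  define T where "T = (\<lambda>fs. mk (queries EL m fs) (\<lambda>S. r (cnt (set EL) m fs S)) {})"
  define V where "V = valid (set EL) H"
  have A: "samp_alg VF EL n m r = map_pmf T D" unfolding samp_alg_def T_def D_def f0_def I_def ..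
  have runT: "run (T fs) H = r (cnt (set EL) m fs H)" for fs
  proof -
    have "run (T fs) H = r (cnt (set EL) m fs ({} \<union> (H \<inter> set (queries EL m fs))))"
      unfolding T_def by (rule run_mk)
    also have "cnt (set EL) m fs ({} \<union> (H \<inter> set (queries EL m fs))) = cnt (set EL) m fs H"
      unfolding cnt_def valid_def queries_def by (rule arg_cong[where f=card]) force
    finally show ?thesis .
  qed
  have "measure_pmf.prob (map_pmf T D) {t. Q (run t H)} = measure_pmf.prob D (T -` {t. Q (run t H)})"
    by (rule measure_map_pmf)
  also have "T -` {t. Q (run t H)} = (\<lambda>fs. cnt (set EL) m fs H) -` {x. Q (r x)}"
    using runT by auto
  also have "measure_pmf.prob D \<dots> = measure_pmf.prob (map_pmf (\<lambda>fs. cnt (set EL) m fs H) D) {x. Q (r x)}"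
    by (rule measure_map_pmf[symmetric])
  also have "map_pmf (\<lambda>fs. cnt (set EL) m fs H) D = binomial_pmf m (t_inj VF (set EL) n H)"
  proof -
    have "map_pmf (\<lambda>fs. cnt (set EL) m fs H) D = map_pmf (\<lambda>g. card {i\<in>{..<m}. g i}) (map_pmf (\<lambda>fs. V \<circ> fs) D)"
      unfolding map_pmf_comp cnt_def V_def by simp
    also have "map_pmf (\<lambda>fs. V \<circ> fs) D = Pi_pmf {..<m} (V f0) (\<lambda>_. map_pmf V (pmf_of_set I))"
      unfolding D_def by (rule Pi_pmf_map[symmetric]) auto
    also have "map_pmf V (pmf_of_set I) = bernoulli_pmf (t_inj VF (set EL) n H)"
      unfolding t_inj_eq[OF fin] V_def I_def by (rule map_pmf_bernoulli[OF finI[unfolded I_def] ne[unfolded I_def]])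
    also have "map_pmf (\<lambda>g. card {i\<in>{..<m}. g i}) (Pi_pmf {..<m} (V f0) (\<lambda>_. bernoulli_pmf (t_inj VF (set EL) n H)))
        = binomial_pmf m (t_inj VF (set EL) n H)"
      by (rule binomial_pmf_altdef'[symmetric]) (auto simp: t_inj_nonneg[OF fin] t_inj_le1[OF fin])
    finally show ?thesis .
  qed
  finally show ?thesis unfolding A .
qed




lemma hoeff:
  assumes m: "0 < m" and t: "0 \<le> t" "t \<le> 1" and g: "0 < \<gamma>" and mg: "real m * \<gamma>^2 \<ge> 2"
  shows "measure_pmf.prob (binomial_pmf m t) {x. \<gamma> \<le> \<bar>real x / real m - t\<bar>} \<le> 1/3"
proof -
  have bd: "binomial_distribution t" by unfold_locales (use t in auto)
  have "measure_pmf.prob (binomial_pmf m t) {x. \<gamma> \<le> \<bar>real x / real m - t\<bar>}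
      \<le> 2 * exp (real_of_int (- 2 * int m) * \<gamma>\<^sup>2)"
    by (rule binomial_distribution.prob_abs_ge'[OF bd m]) (use g in simp)
  also have "real_of_int (- 2 * int m) * \<gamma>\<^sup>2 = - (2 * (real m * \<gamma>^2))" by simp
  also have "2 * exp (- (2 * (real m * \<gamma>^2))) \<le> 2 * exp (- 4)" using mg by simp
  also have "\<dots> \<le> 1/3"
  proof -
    have e2: "exp (2::real) \<ge> 3" using exp_ge_add_one_self[of 2] by simp
    have "exp (4::real) = exp 2 * exp 2" by (simp flip: exp_add)
    also have "\<dots> \<ge> 3 * 3" using e2 by (intro mult_mono) auto
    finally have "exp (4::real) \<ge> 9" by simp
    then show ?thesis by (simp add: exp_minus field_simps)
  qed
  finally show ?thesis .
qed

lemma not_far: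
  assumes "kgraph k {0..<n} H" "P n H" "0 \<le> \<alpha>"
  shows "\<not> far k P \<alpha> n H"
  unfolding far_def using assms by (intro notI) (auto intro!: exI[of _ H])

lemma prob_compl_UNIV:
  "measure_pmf.prob M {x. \<not> R x} = 1 - measure_pmf.prob M {x. R x}"
proof -
  have "{x. \<not> R x} = space (measure_pmf M) - {x. R x}" by auto
  then show ?thesis using measure_pmf.prob_compl[of "{x. R x}" M] by simp
qed


lemma testable_const:
  assumes "\<And>n H. P n H = P n {}"
  shows "testable k P"
  unfolding testable_def
proof (intro exI[of _ "\<lambda>_. 0"] allI impI)
  fix n :: nat and \<alpha> :: real assume \<alpha>: "0 < \<alpha> \<and> \<alpha> < 1"
  show "\<exists>A. (\<forall>t\<in>set_pmf A. valid_queries n k t \<and> depth t \<le> 0) \<and>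
      (\<forall>H. kgraph k {0..<n} H \<longrightarrow>
        (P n H \<longrightarrow> 2 / 3 \<le> measure_pmf.prob A {t. run t H}) \<and>
        (far k P \<alpha> n H \<longrightarrow> 2 / 3 \<le> measure_pmf.prob A {t. \<not> run t H}))"
  proof (intro exI[of _ "return_pmf (Leaf (P n {}))"] conjI allI impI)
    fix H assume H: "kgraph k {0..<n} H"
    show "P n H \<Longrightarrow> 2 / 3 \<le> measure_pmf.prob (return_pmf (Leaf (P n {}))) {t. run t H}"
      using assms[of n H] by (simp add: indicator_def)
    assume "far k P \<alpha> n H"
    then have "\<not> P n H" using not_far[OF H, of P \<alpha>] \<alpha> by auto
    then show "2 / 3 \<le> measure_pmf.prob (return_pmf (Leaf (P n {}))) {t. \<not> run t H}"
      using assms[of n H] by (simp add: indicator_def)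
  qed auto
qed

theorem corollary11p1:
  fixes p \<delta> :: real and k :: nat and VF :: "'a set" and EF :: "'a set set"
  assumes "0 < p" "p < 1" "0 < \<delta>" "\<delta> < 1" "k \<ge> 2"
    and "finite VF" "kgraph k VF EF"
  shows "testable k (\<lambda>n H. \<bar>t_inj VF EF n H - p\<bar> \<le> \<delta>)"
proof (cases "EF = {}")
  case True
  have eq: "t_inj VF EF n H = t_inj VF EF n {}" for n H
    unfolding t_inj_def inj_count_eq valid_def True by simp
  show ?thesis
  proof (rule testable_const)
    fix n H
    show "(\<bar>t_inj VF EF n H - p\<bar> \<le> \<delta>) = (\<bar>t_inj VF EF n {} - p\<bar> \<le> \<delta>)"
      using eq[of n H] by (simp only:)
  qed
next
  case False
  note fin = assms(6) and kg = assms(7)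
  define P where "P = (\<lambda>n H. \<bar>t_inj VF EF n H - p\<bar> \<le> \<delta>)"
  define E where "E = card EF"
  define v where "v = card VF"
  define \<gamma> where "\<gamma> = (\<lambda>\<alpha>. gam p \<alpha> E)"
  define m where "m = (\<lambda>\<alpha>. nat \<lceil>2 / (\<gamma> \<alpha>)^2\<rceil>)"
  define N0 where "N0 = (\<lambda>\<alpha>. nat \<lceil>real v + real v / \<delta> + 2 * (real E + 1) * real k / \<alpha>\<rceil>)"
  define q where "q = (\<lambda>\<alpha>. max (2 ^ N0 \<alpha>) (m \<alpha> * E))"
  have finEF: "finite EF" by (rule finite_EF[OF fin kg])
  obtain EL where EL: "set EL = EF" "distinct EL" using finite_distinct_list[OF finEF] by blast
  have lEL: "length EL = E" unfolding E_def using EL distinct_card by fastforce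
  obtain e0 where e0: "e0 \<in> EF" using False by blast
  have vk: "k \<le> v"
  proof -
    have "e0 \<subseteq> VF" "card e0 = k" using kg e0 unfolding kgraph_def by auto
    then show ?thesis unfolding v_def using fin card_mono by blast
  qed
  have "testable k P"
    unfolding testable_def
  proof (intro exI[of _ q] allI impI)
    fix n :: nat and \<alpha> :: real assume \<alpha>: "0 < \<alpha> \<and> \<alpha> < 1"
    have gpos: "\<gamma> \<alpha> > 0" unfolding \<gamma>_def gam_def using assms(1,2) \<alpha> by simp
    show "\<exists>A. (\<forall>t\<in>set_pmf A. valid_queries n k t \<and> depth t \<le> q \<alpha>) \<and>
      (\<forall>H. kgraph k {0..<n} H \<longrightarrow>
        (P n H \<longrightarrow> 2 / 3 \<le> measure_pmf.prob A {t. run t H}) \<and>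
        (far k P \<alpha> n H \<longrightarrow> 2 / 3 \<le> measure_pmf.prob A {t. \<not> run t H}))"
    proof (cases "n < N0 \<alpha>")
      case True
      define K where "K = {e. e \<subseteq> {0..<n} \<and> card e = k}"
      have finK: "finite K" unfolding K_def by (rule finite_subset[of _ "Pow {0..<n}"]) auto
      obtain KL where KL: "set KL = K" "distinct KL" using finite_distinct_list[OF finK] by blast
      have lKL: "length KL = n choose k"
        using distinct_card[OF KL(2)] KL(1) n_subsets[of "{0..<n}" k] unfolding K_def by simp
      define T where "T = mk KL (P n) {}"
      have runT: "run T H = P n H" if "kgraph k {0..<n} H" for H
      proof -
        have "H \<subseteq> K" using that unfolding kgraph_def K_def by auto
        then have "{} \<union> (H \<inter> set KL) = H" using KL by auto
        then show ?thesis unfolding T_def run_mk by simp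
      qed
      have dT: "depth T \<le> q \<alpha>"
      proof -
        have "depth T \<le> n choose k" using depth_mk[of KL "P n" "{}"] lKL T_def by simp
        also have "\<dots> \<le> 2 ^ n" by (rule binomial_le_pow2)
        also have "\<dots> \<le> 2 ^ N0 \<alpha>" using True by (intro power_increasing) auto
        also have "\<dots> \<le> q \<alpha>" unfolding q_def by simp
        finally show ?thesis .
      qed
      have vT: "valid_queries n k T" unfolding T_def by (rule valid_mk) (use KL K_def in auto)
      show ?thesis
      proof (intro exI[of _ "return_pmf T"] conjI allI impI)
        show "\<forall>t\<in>set_pmf (return_pmf T). valid_queries n k t \<and> depth t \<le> q \<alpha>" using vT dT by simp
        fix H assume H: "kgraph k {0..<n} H"
        show "P n H \<Longrightarrow> 2 / 3 \<le> measure_pmf.prob (return_pmf T) {t. run t H}"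
          using runT[OF H] by (simp add: indicator_def)
        assume "far k P \<alpha> n H"
        then have "\<not> P n H" using not_far[OF H, of P \<alpha>] \<alpha> by auto
        then show "2 / 3 \<le> measure_pmf.prob (return_pmf T) {t. \<not> run t H}"
          using runT[OF H] by (simp add: indicator_def)
      qed
    next
      case big: False
      have nN: "real n \<ge> real v + real v / \<delta> + 2 * (real E + 1) * real k / \<alpha>"
      proof -
        have "real (N0 \<alpha>) \<ge> real v + real v / \<delta> + 2 * (real E + 1) * real k / \<alpha>"
          unfolding N0_def by linarith
        then show ?thesis using big by linarith
      qed
      have pos1: "real v / \<delta> \<ge> 0" "2 * (real E + 1) * real k / \<alpha> \<ge> 0" using assms(3) \<alpha> by auto
      have vn: "card VF \<le> n" using nN pos1 unfolding v_def by linarith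
      have v1: "v \<ge> 1" using vk assms(5) by simp
      have npos: "real n > 0" using vn v1 v_def by simp
      have vn2: "real (card VF) / real n \<le> 2 * \<delta>"
      proof -
        have "real v / \<delta> \<le> real n" using nN pos1 by linarith
        then have "real v \<le> \<delta> * real n" using assms(3) by (simp add: field_simps)
        then have "real v / real n \<le> \<delta>" using npos by (simp add: field_simps)
        then show ?thesis unfolding v_def using assms(3) by simp
      qed
      have B: "\<alpha> * real (n choose k) \<ge> 2 * (real (card EF) + 1)"
      proof -
        have kn: "k \<le> n" using vk vn v_def by simp
        have k1: "real k \<ge> 1" using assms(5) by simp
        have nk1: "real n / real k \<ge> 1" using kn k1 by simp
        have "real n / real k \<le> (real n / real k) ^ k"
          using nk1 assms(5) by (metis One_nat_def power_one_right power_increasing Suc_1 Suc_leD)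
        also have "\<dots> \<le> real (n choose k)" by (rule binomial_ge_n_over_k_pow_k[OF kn])
        finally have nb: "real n / real k \<le> real (n choose k)" .
        have "2 * (real E + 1) * real k / \<alpha> \<le> real n" using nN pos1 by linarith
        then have "2 * (real E + 1) \<le> \<alpha> * (real n / real k)" using \<alpha> k1 by (simp add: field_simps)
        also have "\<dots> \<le> \<alpha> * real (n choose k)" using nb \<alpha> by (intro mult_left_mono) auto
        finally show ?thesis unfolding E_def .
      qed
      define mm where "mm = m \<alpha>"
      have mg: "real mm * (\<gamma> \<alpha>)^2 \<ge> 2"
      proof -
        have "real mm \<ge> 2 / (\<gamma> \<alpha>)^2" unfolding mm_def m_def by linarith
        then show ?thesis using gpos by (simp add: field_simps)
      qed
      have mpos: "mm > 0" using mg by (cases mm) auto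
      define r where "r = (\<lambda>x::nat. \<bar>real x / real mm - p\<bar> \<le> \<delta> + \<gamma> \<alpha>)"
      define A where "A = samp_alg VF EL n mm r"
      have kgEL: "kgraph k VF (set EL)" using kg EL by simp
      have sup: "\<forall>t\<in>set_pmf A. valid_queries n k t \<and> depth t \<le> q \<alpha>"
      proof
        fix t assume "t \<in> set_pmf A"
        then have "valid_queries n k t \<and> depth t \<le> mm * length EL"
          unfolding A_def by (intro samp_support[OF fin kgEL vn])
        then show "valid_queries n k t \<and> depth t \<le> q \<alpha>" unfolding q_def mm_def lEL by auto
      qed
      have pr: "measure_pmf.prob A {t. Q (run t H)} =
          measure_pmf.prob (binomial_pmf mm (t_inj VF EF n H)) {x. Q (r x)}" for Q H
        unfolding A_def using samp_prob[OF fin vn, of EL mm r Q H] EL by simp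
      have bad: "measure_pmf.prob (binomial_pmf mm (t_inj VF EF n H))
          {x. \<gamma> \<alpha> \<le> \<bar>real x / real mm - t_inj VF EF n H\<bar>} \<le> 1/3" for H
        by (rule hoeff[OF mpos t_inj_nonneg[OF fin] t_inj_le1[OF fin] gpos mg])
      show ?thesis
      proof (intro exI[of _ A] conjI allI impI sup)
        fix H assume H: "kgraph k {0..<n} H"
        define tH where "tH = t_inj VF EF n H"
        {
          assume "P n H"
          then have close: "\<bar>tH - p\<bar> \<le> \<delta>" unfolding P_def tH_def .
          have "{x. \<not> r x} \<subseteq> {x. \<gamma> \<alpha> \<le> \<bar>real x / real mm - tH\<bar>}"
            unfolding r_def using close by auto
          then have "measure_pmf.prob (binomial_pmf mm tH) {x. \<not> r x} \<le>
              measure_pmf.prob (binomial_pmf mm tH) {x. \<gamma> \<alpha> \<le> \<bar>real x / real mm - tH\<bar>}"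
            by (rule measure_pmf.finite_measure_mono) simp
          then have "measure_pmf.prob (binomial_pmf mm tH) {x. \<not> r x} \<le> 1/3"
            using bad[of H] unfolding tH_def by linarith
          then have "measure_pmf.prob (binomial_pmf mm tH) {x. r x} \<ge> 2/3"
            using prob_compl_UNIV[of "binomial_pmf mm tH" r] by simp
          then show "2 / 3 \<le> measure_pmf.prob A {t. run t H}"
            using pr[of "\<lambda>b. b" H] unfolding tH_def by simp
        }
        assume far: "far k P \<alpha> n H"
        have farH: "\<bar>tH - p\<bar> > \<delta> + 2 * \<gamma> \<alpha>"
        proof (rule ccontr)
          assume "\<not> ?thesis"
          then have tc: "\<bar>t_inj VF EF n H - p\<bar> \<le> \<delta> + 2 * gam p \<alpha> (card EF)"
            unfolding tH_def \<gamma>_def E_def by simp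
          have HK: "H \<subseteq> {e. e \<subseteq> {0..<n} \<and> card e = k}" using H unfolding kgraph_def by auto
          obtain G where G: "G \<subseteq> {e. e \<subseteq> {0..<n} \<and> card e = k}" "\<bar>t_inj VF EF n G - p\<bar> \<le> \<delta>"
            "real (card ((G - H) \<union> (H - G))) \<le> \<alpha> * real (n choose k)"
            using close_lemma[OF fin kg False assms(5) assms(1,2,3) _ _ vn vn2 B HK tc] \<alpha> by blast
          have "kgraph k {0..<n} G" using G(1) unfolding kgraph_def by auto
          then show False using far G unfolding far_def P_def by blast
        qed
        have "{x. r x} \<subseteq> {x. \<gamma> \<alpha> \<le> \<bar>real x / real mm - tH\<bar>}"
          unfolding r_def using farH by auto
        then have "measure_pmf.prob (binomial_pmf mm tH) {x. r x} \<le>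
            measure_pmf.prob (binomial_pmf mm tH) {x. \<gamma> \<alpha> \<le> \<bar>real x / real mm - tH\<bar>}"
          by (rule measure_pmf.finite_measure_mono) simp
        then have "measure_pmf.prob (binomial_pmf mm tH) {x. r x} \<le> 1/3"
          using bad[of H] unfolding tH_def by linarith
        then have "measure_pmf.prob (binomial_pmf mm tH) {x. \<not> r x} \<ge> 2/3"
          using prob_compl_UNIV[of "binomial_pmf mm tH" r] by simp
        then show "2 / 3 \<le> measure_pmf.prob A {t. \<not> run t H}"
          using pr[of "\<lambda>b. \<not> b" H] unfolding tH_def by simp
      qed
    qed
  qed
  then show ?thesis unfolding P_def .
qed


end
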